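(* Let $r \in \mathbb{Q}_{>0}$ be such that $S_r$ is atomic. Then: (1) $S_r$ is a BF-monoid if and only if $r \ge 1$. (2) If $r \in \mathbb{N}$, then $S_r \cong \mathbb{N}_0$, and $\Delta(x) = \emptyset$ and $\mathsf{c}(x) = 0$ for all $x \in S_r \setminus\{0\}$. (3) If $r \notin \mathbb{N}$, then $\Delta(x) = \{|\mathsf{n}(r) - \mathsf{d}(r)|\}$ for every $x \in S_r$ with $|\mathsf{Z}(x)| > 1$; hence $\Delta(S_r) = \{|\mathsf{n}(r) - \mathsf{d}(r)|\}$. (4) If $r \notin \mathbb{N}$, then $\mathsf{Ca}(S_r) = \{\max\{\mathsf{n}(r), \mathsf{d}(r)\}\}$; hence $\mathsf{c}(S_r) = \max\{\mathsf{n}(r), \mathsf{d}(r)\}$.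
   Context: For $q \in \mathbb{Q}_{>0}$, $\mathsf{n}(q),\mathsf{d}(q)$ are the positive coprime integers with $q = \mathsf{n}(q)/\mathsf{d}(q)$. $S_r$ is the additive submonoid of $(\mathbb{Q}_{\ge 0},+)$ generated by $\{r^n : n \in \mathbb{N}_0\}$; it is atomic exactly when $r=1$ or $\mathsf{n}(r)>1$, and for $r \notin \mathbb{N}$ atomic its atoms are the elements $r^n$, $n \in \mathbb{N}_0$. Factorizations of $x$ are elements of the free commutative monoid $\mathsf{Z}(S_r)$ on the atoms mapping to $x$; $\mathsf{Z}(x)$ is their set, $|z|$ the length (number of atoms with multiplicity), $\mathsf{L}(x)$ the set of lengths. $S_r$ is a BF-monoid if $\mathsf{L}(x)$ is finite for all $x$. For $x \ne 0$, $d \in \mathbb{N}$ is a distance of $x$ if $\mathsf{L}(x) \cap \{\ell, \ell+1, \dots, \ell+d\} = \{\ell, \ell+d\}$ for some $\ell \in \mathsf{L}(x)$; $\Delta(x)$ is the set of such $d$ and $\Delta(S_r) = \bigcup_{x \neq 0} \Delta(x)$. For factorizations $z = \sum_a \mu_a a$, $z' = \sum_a \nu_a a$, $\gcd(z,z') = \sum_a \min\{\mu_a,\nu_a\} a$ and $\mathsf{d}(z,z') = \max\{|z| - |\gcd(z,z')|, |z'| - |\gcd(z,z')|\}$. An $N$-chain from $z$ to $z'$ in $\mathsf{Z}(x)$ is a sequence $z=z_0, \dots, z_k = z'$ in $\mathsf{Z}(x)$ with $\mathsf{d}(z_{i-1}, z_i) \le N$. The catenary degree $\mathsf{c}(x)$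 is the least $N \in \mathbb{N}_0 \cup \{\infty\}$ such that any two factorizations of $x$ are connected by an $N$-chain; $\mathsf{c}(S_r) = \sup_x \mathsf{c}(x)$ and $\mathsf{Ca}(S_r) = \{\mathsf{c}(x) : x \in S_r, \mathsf{c}(x) > 0\}$. *)

theory Defs
  imports Complex_Main "HOL-Library.Multiset" "HOL-Library.Extended_Nat"
begin

definition numr :: "rat \<Rightarrow> int" where "numr q = fst (quotient_of q)"
definition denr :: "rat \<Rightarrow> int" where "denr q = snd (quotient_of q)"

definition Sr :: "rat \<Rightarrow> rat set" where
  "Sr r = {x. \<exists>m :: nat multiset. x = sum_mset (image_mset (\<lambda>k. r ^ k) m)}"

text \<open>Atoms of a submonoid S of (Q_{\<ge>0},+) (the only unit is 0).\<close>
definition atoms :: "rat set \<Rightarrow> rat set" where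
  "atoms S = {a \<in> S. a \<noteq> 0 \<and> (\<forall>b\<in>S. \<forall>c\<in>S. a = b + c \<longrightarrow> b = 0 \<or> c = 0)}"

text \<open>Factorizations: finite multisets of atoms (free commutative monoid on atoms) mapping to x.\<close>
definition Zf :: "rat set \<Rightarrow> rat \<Rightarrow> rat multiset set" where
  "Zf S x = {z. set_mset z \<subseteq> atoms S \<and> sum_mset z = x}"

definition atomic :: "rat set \<Rightarrow> bool" where
  "atomic S \<longleftrightarrow> (\<forall>x\<in>S. x \<noteq> 0 \<longrightarrow> Zf S x \<noteq> {})"

definition Lset :: "rat set \<Rightarrow> rat \<Rightarrow> nat set" where
  "Lset S x = size ` Zf S x"

definition BF_monoid :: "rat set \<Rightarrow> bool" where
  "BF_monoid S \<longleftrightarrow> (\<forall>x\<in>S. finite (Lset S x))"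

definition Delta :: "rat set \<Rightarrow> rat \<Rightarrow> nat set" where
  "Delta S x = {d. d \<ge> 1 \<and> (\<exists>l\<in>Lset S x. Lset S x \<inter> {l..l+d} = {l, l+d})}"

definition Delta_monoid :: "rat set \<Rightarrow> nat set" where
  "Delta_monoid S = (\<Union>x\<in>S - {0}. Delta S x)"

definition fdist :: "rat multiset \<Rightarrow> rat multiset \<Rightarrow> nat" where
  "fdist z z' = (let g = z \<inter># z' in max (size z - size g) (size z' - size g))"

definition is_chain :: "rat set \<Rightarrow> rat \<Rightarrow> enat \<Rightarrow> rat multiset list \<Rightarrow> bool" where
  "is_chain S x N zs \<longleftrightarrow> zs \<noteq> [] \<and> set zs \<subseteq> Zf S x \<and>
     (\<forall>i. Suc i < length zs \<longrightarrow> enat (fdist (zs ! i) (zs ! Suc i)) \<le> N)"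

text \<open>Catenary degree of x: least N in N_0 \<union> {\<infinity>} (Inf of empty set of enat is \<infinity>).\<close>
definition cat :: "rat set \<Rightarrow> rat \<Rightarrow> enat" where
  "cat S x = Inf {N. \<forall>z\<in>Zf S x. \<forall>z'\<in>Zf S x.
       \<exists>zs. is_chain S x N zs \<and> hd zs = z \<and> last zs = z'}"

definition cat_monoid :: "rat set \<Rightarrow> enat" where
  "cat_monoid S = (SUP x\<in>S. cat S x)"

definition Ca :: "rat set \<Rightarrow> enat set" where
  "Ca S = {cat S x | x. x \<in> S \<and> cat S x > 0}"

end

theory Submission
  imports Defs
begin


lemma count_image_inj:
  assumes "inj f" shows "count (image_mset f A) (f x) = count A x"
proof -
  have "f -` {f x} = {x}" using assms by (auto simp: inj_def)
  then show ?thesis by (cases "x \<in># A") (simp_all add: count_image_mset count_eq_zero_iff)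
qed

lemma count_image_notin:
  assumes "b \<notin> range f" shows "count (image_mset f A) b = 0"
  using assms by (auto simp: count_eq_zero_iff)

lemma image_diff_inj:
  assumes "inj f" shows "image_mset f (u - v) = image_mset f u - image_mset f v"
proof (rule multiset_eqI)
  fix b show "count (image_mset f (u - v)) b = count (image_mset f u - image_mset f v) b"
  proof (cases "b \<in> range f")
    case True then obtain x where "b = f x" by auto
    then show ?thesis using assms by (simp add: count_image_inj)
  next
    case False then show ?thesis by (simp add: count_image_notin)
  qed
qed

lemma fdist_alt: "fdist z z' = max (size (z - z')) (size (z' - z))"
  by (simp add: fdist_def Let_def size_Diff_subset_Int multiset_inter_commute)

lemma unique_fact:
  assumes "\<forall>z\<in>Zf S x. \<forall>z'\<in>Zf S x. z = z'"
  shows "Delta S x = {}" "cat S x = 0"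
proof -
  show "Delta S x = {}"
  proof (rule ccontr)
    assume "Delta S x \<noteq> {}"
    then obtain k l where k: "k \<ge> 1" "l \<in> Lset S x" "Lset S x \<inter> {l..l+k} = {l, l+k}"
      unfolding Delta_def by auto
    then have "l + k \<in> Lset S x" by auto
    with k(2) obtain z z' where "z \<in> Zf S x" "z' \<in> Zf S x" "size z = l" "size z' = l + k"
      unfolding Lset_def by auto
    with assms k(1) show False by auto
  qed
  have "0 \<in> {N. \<forall>z\<in>Zf S x. \<forall>z'\<in>Zf S x. \<exists>zs. is_chain S x N zs \<and> hd zs = z \<and> last zs = z'}"
  proof (safe)
    fix z z' assume "z \<in> Zf S x" "z' \<in> Zf S x"
    with assms have "is_chain S x 0 [z] \<and> hd [z] = z \<and> last [z] = z'"
      by (auto simp: is_chain_def)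
    then show "\<exists>zs. is_chain S x 0 zs \<and> hd zs = z \<and> last zs = z'" by blast
  qed
  then have "cat S x \<le> 0" unfolding cat_def by (rule Inf_lower)
  then show "cat S x = 0" by simp
qed

lemma dvd_small:
  fixes g :: nat assumes "g dvd x" "0 < x" "x \<le> g" shows "x = g"
  using assms by (metis dvd_imp_le le_antisym)

lemma delta_AP:
  fixes A :: "nat set" and g :: nat
  assumes g1: "g \<ge> 1"
    and dv: "\<And>a b. a\<in>A \<Longrightarrow> b\<in>A \<Longrightarrow> a \<le> b \<Longrightarrow> g dvd (b - a)"
    and cv: "\<And>a b l. a\<in>A \<Longrightarrow> b\<in>A \<Longrightarrow> a \<le> l \<Longrightarrow> l \<le> b \<Longrightarrow> g dvd (l - a) \<Longrightarrow> l \<in> A"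
    and ex: "\<exists>a\<in>A. a + g \<in> A"
  shows "{k. k \<ge> 1 \<and> (\<exists>l\<in>A. A \<inter> {l..l+k} = {l, l+k})} = {g}"
proof
  show "{g} \<subseteq> {k. k \<ge> 1 \<and> (\<exists>l\<in>A. A \<inter> {l..l+k} = {l, l+k})}"
  proof -
    obtain a where a: "a \<in> A" "a + g \<in> A" using ex by blast
    have "A \<inter> {a..a+g} = {a, a+g}"
    proof
      show "{a, a+g} \<subseteq> A \<inter> {a..a+g}" using a by auto
      show "A \<inter> {a..a+g} \<subseteq> {a, a+g}"
      proof
        fix c assume c: "c \<in> A \<inter> {a..a+g}"
        then have "g dvd (c - a)" using dv a by auto
        moreover have "c - a \<le> g" using c by auto
        ultimately have "c - a = 0 \<or> c - a = g" using dvd_small by blast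
        then show "c \<in> {a, a+g}" using c by auto
      qed
    qed
    then show ?thesis using a g1 by auto
  qed
  show "{k. k \<ge> 1 \<and> (\<exists>l\<in>A. A \<inter> {l..l+k} = {l, l+k})} \<subseteq> {g}"
  proof
    fix k assume "k \<in> {k. k \<ge> 1 \<and> (\<exists>l\<in>A. A \<inter> {l..l+k} = {l, l+k})}"
    then obtain l where k: "k \<ge> 1" "l \<in> A" "A \<inter> {l..l+k} = {l, l+k}" by auto
    then have lk: "l + k \<in> A" by auto
    then have "g dvd k" using dv[OF k(2) lk] by simp
    then have "g \<le> k" using k(1) by (simp add: dvd_imp_le)
    then have "l + g \<in> A" using cv[OF k(2) lk, of "l+g"] by simp
    then have "l + g \<in> A \<inter> {l..l+k}" using \<open>g \<le> k\<close> by auto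
    then have "l + g \<in> {l, l+k}" using k(3) by simp
    then show "k \<in> {g}" using g1 by auto
  qed
qed

lemma rtranclp_list:
  assumes "R\<^sup>*\<^sup>* a b"
  shows "\<exists>zs. zs \<noteq> [] \<and> hd zs = a \<and> last zs = b \<and> set zs \<subseteq> {y. R\<^sup>*\<^sup>* a y} \<and>
           (\<forall>i. Suc i < length zs \<longrightarrow> R (zs!i) (zs!Suc i))"
  using assms
proof (induction rule: converse_rtranclp_induct)
  case base
  then show ?case by (intro exI[of _ "[b]"]) auto
next
  case (step a c)
  then obtain zs where zs: "zs \<noteq> []" "hd zs = c" "last zs = b" "set zs \<subseteq> {y. R\<^sup>*\<^sup>* c y}"
     "\<forall>i. Suc i < length zs \<longrightarrow> R (zs!i) (zs!Suc i)" by blast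
  have "\<forall>i. Suc i < length (a#zs) \<longrightarrow> R ((a#zs)!i) ((a#zs)!Suc i)"
  proof (intro allI impI)
    fix i assume i: "Suc i < length (a#zs)"
    show "R ((a#zs)!i) ((a#zs)!Suc i)"
    proof (cases i)
      case 0 then show ?thesis using zs step(1) by (simp add: hd_conv_nth)
    next
      case (Suc j) then show ?thesis using zs i by simp
    qed
  qed
  moreover have "set (a#zs) \<subseteq> {y. R\<^sup>*\<^sup>* a y}"
    using zs(4) step(1) by (auto intro: converse_rtranclp_into_rtranclp)
  ultimately show ?case using zs by (intro exI[of _ "a#zs"]) auto
qed

lemma chain_const:
  assumes "zs \<noteq> []" "\<forall>i. Suc i < length zs \<longrightarrow> zs!i = zs!Suc i"
  shows "hd zs = last zs"
  using assms
proof (induction zs)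
  case Nil then show ?case by simp
next
  case (Cons a zs)
  show ?case
  proof (cases zs)
    case Nil then show ?thesis by simp
  next
    case (Cons b ys)
    have "\<forall>i. Suc i < length zs \<longrightarrow> zs!i = zs!Suc i"
      using Cons.prems(2) by (metis Suc_less_eq length_Cons nth_Cons_Suc)
    then have "hd zs = last zs" using Cons.IH Cons by simp
    moreover have "a = hd zs" using Cons.prems(2)[rule_format, of 0] Cons by simp
    ultimately show ?thesis using Cons by simp
  qed
qed

lemma G:
  fixes f :: "nat \<Rightarrow> nat"
  assumes "\<forall>j\<in>#u+v. j \<noteq> K \<longrightarrow> p dvd f j" "K \<notin># v" "coprime p (f K)"
    "sum_mset (image_mset f u) = sum_mset (image_mset f v)"
  shows "p dvd count u K"
proof -
  have A: "\<And>w. (\<forall>j\<in>#w. j \<noteq> K \<longrightarrow> p dvd f j) \<Longrightarrow> \<exists>c. sum_mset (image_mset f w) = count w K * f K + p * c"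
  proof -
    fix w show "(\<forall>j\<in>#w. j \<noteq> K \<longrightarrow> p dvd f j) \<Longrightarrow> \<exists>c. sum_mset (image_mset f w) = count w K * f K + p * c"
    proof (induction w)
      case empty then show ?case by simp
    next
      case (add j w)
      then obtain c where c: "sum_mset (image_mset f w) = count w K * f K + p * c" by auto
      show ?case
      proof (cases "j = K")
        case True then show ?thesis using c by (intro exI[of _ c]) simp
      next
        case False
        then obtain e where "f j = p * e" using add.prems by auto
        then show ?thesis using c False by (intro exI[of _ "c + e"]) (simp add: algebra_simps)
      qed
    qed
  qed
  obtain c where c: "sum_mset (image_mset f u) = count u K * f K + p * c" using A assms(1) by auto
  obtain c' where c': "sum_mset (image_mset f v) = count v K * f K + p * c'" using A assms(1) by auto
  have "count v K = 0" using assms(2) by (simp add: count_eq_zero_iff)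
  then have "count u K * f K + p * c = p * c'" using c c' assms(4) by simp
  then have "p dvd count u K * f K + p * c" by (metis dvd_triv_left)
  then have "p dvd count u K * f K" using dvd_add_left_iff[of p "p*c"] by simp
  then show ?thesis using assms(3) by (simp add: coprime_commute coprime_dvd_mult_left_iff)
qed



locale pw =
  fixes r :: rat and n d :: nat
  assumes r_eq: "r = of_nat n / of_nat d" and n_pos: "0 < n" and d2: "2 \<le> d"
    and cop: "coprime n d"
begin

definition val :: "nat multiset \<Rightarrow> rat" where
  "val u = sum_mset (image_mset (\<lambda>k. r^k) u)"

lemma d_pos: "0 < d" using d2 by simp

lemma r_pos: "0 < r" using n_pos d_pos r_eq by simp

lemma r_ne1: "r \<noteq> 1"
proof
  assume "r = 1"
  then have "n = d" using r_eq d_pos by (simp add: field_simps)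
  then show False using cop d2 by simp
qed

lemma dr: "of_nat d * r ^ Suc k = of_nat n * r ^ k"
  using d_pos r_eq by (simp add: field_simps)

lemma inj_pow: "inj (\<lambda>k::nat. r ^ k)"
  using power_inject_exp'[OF r_ne1 r_pos] by (auto simp: inj_def)

lemma val_empty[simp]: "val {#} = 0" by (simp add: val_def)
lemma val_add[simp]: "val (u + v) = val u + val v" by (simp add: val_def)
lemma val_add_mset[simp]: "val (add_mset k u) = r ^ k + val u" by (simp add: val_def)
lemma val_rep[simp]: "val (replicate_mset c k) = of_nat c * r ^ k"
  by (simp add: val_def sum_mset_replicate_mset)

lemma val_pos: "u \<noteq> {#} \<Longrightarrow> 0 < val u"
proof (induction u)
  case empty then show ?case by simp
next
  case (add k u)
  have "0 \<le> val u" using add by (cases "u = {#}") auto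
  then show ?case using r_pos by (simp add: add_pos_nonneg)
qed

lemma val_eq_0: "val u = 0 \<longleftrightarrow> u = {#}"
  using val_pos by fastforce

lemma val_int:
  assumes "\<forall>j\<in>#u. m \<le> j \<and> j \<le> M"
  shows "val u * of_nat d ^ M = of_nat n ^ m * of_nat (sum_mset (image_mset (\<lambda>j. n^(j-m) * d^(M-j)) u))"
  using assms
proof (induction u)
  case empty then show ?case by simp
next
  case (add j u)
  then have jm: "m \<le> j" "j \<le> M" by auto
  have e1: "(of_nat d:: rat) ^ M = of_nat d ^ j * of_nat d ^ (M - j)"
    using jm by (simp add: power_add[symmetric])
  have e2: "(of_nat n:: rat) ^ j = of_nat n ^ m * of_nat n ^ (j - m)"
    using jm by (simp add: power_add[symmetric])
  have "r ^ j * of_nat d ^ M = of_nat n ^ m * (of_nat n ^ (j - m) * of_nat d ^ (M - j))"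
    using d_pos unfolding e1 r_eq power_divide by (simp add: e2 field_simps)
  then show ?case using add by (simp add: algebra_simps)
qed

lemma keyD:
  assumes "u \<inter># v = {#}" "val u = val v" "M \<in># u" "\<forall>j\<in>#u+v. j \<le> M"
  shows "d dvd count u M"
proof -
  let ?F = "\<lambda>j. n^(j-0) * d^(M-j)"
  have "val u * of_nat d ^ M = of_nat n ^ 0 * of_nat (sum_mset (image_mset ?F u))"
    by (rule val_int) (use assms(4) in auto)
  moreover have "val v * of_nat d ^ M = of_nat n ^ 0 * of_nat (sum_mset (image_mset ?F v))"
    by (rule val_int) (use assms(4) in auto)
  ultimately have eq: "sum_mset (image_mset ?F u) = sum_mset (image_mset ?F v)"
    using assms(2) by (simp del: of_nat_sum_mset)
  have Mv: "M \<notin># v"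
  proof
    assume "M \<in># v"
    then have "M \<in># u \<inter># v" using assms(3) by simp
    then show False using assms(1) by simp
  qed
  show ?thesis
  proof (rule G[OF _ Mv _ eq])
    show "\<forall>j\<in>#u+v. j \<noteq> M \<longrightarrow> d dvd ?F j"
    proof (intro ballI impI)
      fix j assume "j \<in># u+v" "j \<noteq> M"
      then have "j < M" using assms(4) by fastforce
      then have "M - j = Suc (M - j - 1)" by simp
      then show "d dvd ?F j" by (metis dvd_mult dvd_triv_left power_Suc)
    qed
    show "coprime d (?F M)" using cop by (simp add: coprime_commute)
  qed
qed

lemma keyN:
  assumes "u \<inter># v = {#}" "val u = val v" "m \<in># u" "\<forall>j\<in>#u+v. m \<le> j"
  shows "n dvd count u m"
proof -
  define M where "M = Max (set_mset (u+v))"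
  have bM: "\<forall>j\<in>#u+v. j \<le> M" unfolding M_def by simp
  let ?F = "\<lambda>j. n^(j-m) * d^(M-j)"
  have "val u * of_nat d ^ M = of_nat n ^ m * of_nat (sum_mset (image_mset ?F u))"
    by (rule val_int) (use assms(4) bM in auto)
  moreover have "val v * of_nat d ^ M = of_nat n ^ m * of_nat (sum_mset (image_mset ?F v))"
    by (rule val_int) (use assms(4) bM in auto)
  ultimately have eq: "sum_mset (image_mset ?F u) = sum_mset (image_mset ?F v)"
    using assms(2) n_pos by (simp del: of_nat_sum_mset)
  have mv: "m \<notin># v"
  proof
    assume "m \<in># v"
    then have "m \<in># u \<inter># v" using assms(3) by simp
    then show False using assms(1) by simp
  qed
  show ?thesis
  proof (rule G[OF _ mv _ eq])
    show "\<forall>j\<in>#u+v. j \<noteq> m \<longrightarrow> n dvd ?F j"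
    proof (intro ballI impI)
      fix j assume "j \<in># u+v" "j \<noteq> m"
      then have "m < j" using assms(4) by fastforce
      then have "j - m = Suc (j - m - 1)" by simp
      then show "n dvd ?F j" by (metis dvd_mult2 dvd_triv_left power_Suc)
    qed
    show "coprime n (?F m)" using cop by simp
  qed
qed

lemma sep:
  assumes "u \<noteq> v" "val u = val v"
  shows "(u - v) \<inter># (v - u) = {#}" "val (u - v) = val (v - u)" "u - v \<noteq> {#}" "v - u \<noteq> {#}"
proof -
  show "(u - v) \<inter># (v - u) = {#}" by (rule multiset_eqI) simp
  have du: "u = (u - v) + (u \<inter># v)" by (rule multiset_eqI) (simp add: min_def)
  have dv: "v = (v - u) + (u \<inter># v)" by (rule multiset_eqI) (simp add: min_def)
  have "val (u - v) + val (u \<inter># v) = val (v - u) + val (u \<inter># v)"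
    using assms(2) du dv by (metis val_add)
  then show vv: "val (u - v) = val (v - u)" by simp
  have "\<not> (u - v = {#} \<and> v - u = {#})"
  proof
    assume "u - v = {#} \<and> v - u = {#}"
    then have "u = v" using du dv by simp
    then show False using assms(1) by simp
  qed
  then show "u - v \<noteq> {#}" "v - u \<noteq> {#}" using vv val_eq_0 by metis+
qed

lemma K2:
  assumes "u \<noteq> v" "val u = val v"
  shows "max n d \<le> max (size (u - v)) (size (v - u))"
proof -
  define a where "a = u - v"
  define b where "b = v - u"
  have ab: "a \<inter># b = {#}" "val a = val b" "a \<noteq> {#}" "b \<noteq> {#}"
    using sep[OF assms] unfolding a_def b_def by auto
  have ba: "b \<inter># a = {#}" "val b = val a" using ab by (auto simp: multiset_inter_commute)
  define M where "M = Max (set_mset (a+b))"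
  define m where "m = Min (set_mset (a+b))"
  have ne: "set_mset (a+b) \<noteq> {}" using ab by simp
  have M: "M \<in># a+b" "\<forall>j\<in>#a+b. j \<le> M" unfolding M_def using ne Max_in[of "set_mset (a+b)"] by auto
  have m: "m \<in># a+b" "\<forall>j\<in>#a+b. m \<le> j" unfolding m_def using ne Min_in[of "set_mset (a+b)"] by auto
  have "d \<le> size a \<or> d \<le> size b"
  proof (cases "M \<in># a")
    case True
    have "d dvd count a M" by (rule keyD[OF ab(1,2) True M(2)])
    moreover have "0 < count a M" using True by simp
    ultimately have "d \<le> count a M" by (simp add: dvd_imp_le)
    then show ?thesis using count_le_size[of a M] by simp
  next
    case False
    then have Mb: "M \<in># b" using M(1) by (metis union_iff)
    have "d dvd count b M" by (rule keyD[OF ba(1,2) Mb]) (use M(2) in auto)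
    moreover have "0 < count b M" using Mb by simp
    ultimately have "d \<le> count b M" by (simp add: dvd_imp_le)
    then show ?thesis using count_le_size[of b M] by simp
  qed
  moreover have "n \<le> size a \<or> n \<le> size b"
  proof (cases "m \<in># a")
    case True
    have "n dvd count a m" by (rule keyN[OF ab(1,2) True m(2)])
    moreover have "0 < count a m" using True by simp
    ultimately have "n \<le> count a m" by (simp add: dvd_imp_le)
    then show ?thesis using count_le_size[of a m] by simp
  next
    case False
    then have mb: "m \<in># b" using m(1) by (metis union_iff)
    have "n dvd count b m" by (rule keyN[OF ba(1,2) mb]) (use m(2) in auto)
    moreover have "0 < count b m" using mb by simp
    ultimately have "n \<le> count b m" by (simp add: dvd_imp_le)
    then show ?thesis using count_le_size[of b m] by simp
  qed
  ultimately show ?thesis unfolding a_def b_def by auto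
qed

end


context pw begin

definition step :: "nat multiset \<Rightarrow> nat multiset \<Rightarrow> bool" where
  "step u v \<longleftrightarrow> (\<exists>w k. u = w + replicate_mset d (Suc k) \<and> v = w + replicate_mset n k)"

definition Q where "Q u v \<longleftrightarrow> step u v \<or> step v u"

definition NF where "NF u \<longleftrightarrow> (\<forall>k. count u (Suc k) < d)"

lemma step_val: "step u v \<Longrightarrow> val u = val v"
  unfolding step_def using dr by auto

lemma Q_val: "Q u v \<Longrightarrow> val u = val v"
  unfolding Q_def using step_val by metis

lemma Q_sym: "Q u v \<Longrightarrow> Q v u" unfolding Q_def by auto

lemma Qs_val: "Q\<^sup>*\<^sup>* u v \<Longrightarrow> val u = val v"
  by (induction rule: rtranclp_induct) (auto dest: Q_val)

lemma Qs_sym: "Q\<^sup>*\<^sup>* u v \<Longrightarrow> Q\<^sup>*\<^sup>* v u"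
  by (induction rule: rtranclp_induct) (auto intro: converse_rtranclp_into_rtranclp Q_sym)

lemma step_diff:
  assumes "step u v" shows "size (u - v) = d" "size (v - u) = n"
proof -
  obtain w k where wk: "u = w + replicate_mset d (Suc k)" "v = w + replicate_mset n k"
    using assms unfolding step_def by auto
  have "u - v = replicate_mset d (Suc k)" unfolding wk
    by (rule multiset_eqI) auto
  then show "size (u - v) = d" by simp
  have "v - u = replicate_mset n k" unfolding wk
    by (rule multiset_eqI) auto
  then show "size (v - u) = n" by simp
qed

lemma step_size: "step u v \<Longrightarrow> size v + d = size u + n"
  unfolding step_def by auto

definition g :: nat where "g = (if d \<le> n then n - d else d - n)"

lemma g_pos: "1 \<le> g"
proof -
  have "n \<noteq> d" using cop d2 by auto
  then show ?thesis unfolding g_def by auto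
qed

lemma Q_size: "Q u v \<Longrightarrow> size v = size u + g \<or> size u = size v + g"
  unfolding Q_def g_def using step_size by fastforce

lemma reach_NF: "\<exists>v. step\<^sup>*\<^sup>* u v \<and> NF v"
proof (induction u rule: wf_induct[OF wf_mult[OF wf_less_than]])
  case (1 u)
  show ?case
  proof (cases "NF u")
    case True then show ?thesis by blast
  next
    case False
    then obtain k where k: "d \<le> count u (Suc k)" unfolding NF_def by (auto simp: not_less)
    define w where "w = u - replicate_mset d (Suc k)"
    have u: "u = w + replicate_mset d (Suc k)"
      unfolding w_def using k by (simp add: count_le_replicate_mset_subset_eq)
    define v where "v = w + replicate_mset n k"
    have st: "step u v" unfolding step_def v_def using u by blast
    have "(v, u) \<in> mult less_than"
      unfolding v_def using d_pos
      by (subst u, intro one_step_implies_mult) auto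
    then obtain v' where "step\<^sup>*\<^sup>* v v'" "NF v'" using 1 by blast
    then show ?thesis using st by (meson converse_rtranclp_into_rtranclp)
  qed
qed

lemma steps_val: "step\<^sup>*\<^sup>* u v \<Longrightarrow> val u = val v"
  by (induction rule: rtranclp_induct) (auto dest: step_val)

lemma NF_unique:
  assumes "NF a" "NF b" "val a = val b" shows "a = b"
proof (rule ccontr)
  assume ne: "a \<noteq> b"
  define u where "u = a - b"
  define v where "v = b - a"
  have uv: "u \<inter># v = {#}" "val u = val v" "u \<noteq> {#}" "v \<noteq> {#}"
    using sep[OF ne assms(3)] unfolding u_def v_def by auto
  have vu: "v \<inter># u = {#}" "val v = val u" using uv by (auto simp: multiset_inter_commute)
  define M where "M = Max (set_mset (u+v))"
  have nes: "set_mset (u+v) \<noteq> {}" using uv by simp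
  have M: "M \<in># u+v" "\<forall>j\<in>#u+v. j \<le> M" unfolding M_def using nes Max_in[of "set_mset (u+v)"] by auto
  show False
  proof (cases M)
    case 0
    obtain x where "x \<in># u" using uv(3) by blast
    obtain y where "y \<in># v" using uv(4) by blast
    have "x = 0" "y = 0" using M(2) 0 \<open>x \<in># u\<close> \<open>y \<in># v\<close> by fastforce+
    then have "0 \<in># u \<inter># v" using \<open>x \<in># u\<close> \<open>y \<in># v\<close> by simp
    then show False using uv(1) by simp
  next
    case (Suc k)
    have "d \<le> count u M \<or> d \<le> count v M"
    proof (cases "M \<in># u")
      case True
      have "d dvd count u M" by (rule keyD[OF uv(1,2) True M(2)])
      then show ?thesis using True by (simp add: dvd_imp_le)
    next
      case False
      then have Mv: "M \<in># v" using M(1) by (metis union_iff)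
      have "d dvd count v M" by (rule keyD[OF vu(1,2) Mv]) (use M(2) in auto)
      then show ?thesis using Mv by (simp add: dvd_imp_le)
    qed
    moreover have "count u M < d" "count v M < d"
      using assms(1,2) Suc unfolding NF_def u_def v_def
      by (metis count_diff le_less_trans diff_le_self)+
    ultimately show False by simp
  qed
qed

lemma connect: assumes "val u = val v" shows "Q\<^sup>*\<^sup>* u v"
proof -
  obtain a where a: "step\<^sup>*\<^sup>* u a" "NF a" using reach_NF by blast
  obtain b where b: "step\<^sup>*\<^sup>* v b" "NF b" using reach_NF by blast
  have "val a = val b" using a b assms steps_val by metis
  then have ab: "a = b" using NF_unique a b by blast
  have mono: "\<And>x y. step\<^sup>*\<^sup>* x y \<Longrightarrow> Q\<^sup>*\<^sup>* x y"
    by (erule rtranclp_mono[THEN predicate2D, rotated]) (auto simp: Q_def)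
  have "Q\<^sup>*\<^sup>* u a" using mono a(1) .
  moreover have "Q\<^sup>*\<^sup>* a v" using mono[OF b(1)] ab Qs_sym by simp
  ultimately show ?thesis by simp
qed

lemma Qs_dvd: "Q\<^sup>*\<^sup>* u v \<Longrightarrow> int g dvd int (size v) - int (size u)"
proof (induction rule: rtranclp_induct)
  case base then show ?case by simp
next
  case (step v v')
  have "int (size v') - int (size v) = int g \<or> int (size v') - int (size v) = - int g"
    using Q_size[OF step(2)] by auto
  then have "int g dvd int (size v') - int (size v)" by auto
  then have "int g dvd (int (size v') - int (size v)) + (int (size v) - int (size u))"
    using step(3) by (rule dvd_add)
  then show ?case by simp
qed

lemma int_dvd_small:
  fixes x :: int assumes "int g dvd x" "0 < x" "x \<le> int g" shows "x = int g"
proof -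
  obtain t where t: "x = int g * t" using assms(1) by auto
  have "0 < t" using assms(2) t g_pos by (simp add: zero_less_mult_iff)
  moreover have "t \<le> 1"
  proof (rule ccontr)
    assume "\<not> t \<le> 1"
    then have "int g * 2 \<le> int g * t" using g_pos by (intro mult_left_mono) auto
    then show False using assms(3) t g_pos by simp
  qed
  ultimately show ?thesis using t by simp
qed

lemma Qs_ivt:
  assumes "Q\<^sup>*\<^sup>* u v"
  shows "\<And>l. min (size u) (size v) \<le> l \<Longrightarrow> l \<le> max (size u) (size v) \<Longrightarrow>
     int g dvd int l - int (size u) \<Longrightarrow> \<exists>w. Q\<^sup>*\<^sup>* u w \<and> size w = l"
  using assms
proof (induction rule: rtranclp_induct)
  case base then show ?case by auto
next
  case (step v v')
  show ?case
  proof (cases "min (size u) (size v) \<le> l \<and> l \<le> max (size u) (size v)")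
    case True
    then show ?thesis using step by blast
  next
    case False
    have dv: "int g dvd int l - int (size v)"
    proof -
      have "int g dvd (int l - int (size u)) - (int (size v) - int (size u))"
        using step.prems(3) Qs_dvd[OF step(1)] by (rule dvd_diff)
      then show ?thesis by simp
    qed
    have "l = size v'"
    proof (cases "size v' = size v + g")
      case True
      then have "size v < l" "l \<le> size v + g" using False step.prems(1,2) by auto
      then have "int l - int (size v) = int g" using int_dvd_small[OF dv] by simp
      then show ?thesis using True by simp
    next
      case False2: False
      then have sv: "size v = size v' + g" using Q_size[OF step(2)] by auto
      then have "l < size v" "size v' \<le> l" using False step.prems(1,2) by auto
      moreover have "int g dvd int (size v) - int l"
        using dv by (metis dvd_minus_iff minus_diff_eq)
      ultimately have "int (size v) - int l = int g"
        using int_dvd_small[of "int (size v) - int l"] sv by simp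
      then show ?thesis using sv by simp
    qed
    moreover have "Q\<^sup>*\<^sup>* u v'" using step(1,2) by (rule rtranclp.rtrancl_into_rtrancl)
    ultimately show ?thesis by blast
  qed
qed

end


lemma mset_range: "set_mset z \<subseteq> range f \<Longrightarrow> \<exists>u. z = image_mset f u"
proof (induction z)
  case empty then show ?case by (intro exI[of _ "{#}"]) simp
next
  case (add a z)
  then obtain u where "z = image_mset f u" by auto
  moreover obtain k where "a = f k" using add.prems by auto
  ultimately show ?case by (intro exI[of _ "add_mset k u"]) simp
qed

context pw begin

lemma Sr_eq: "Sr r = range val" unfolding Sr_def val_def by auto

lemma pow_in: "r ^ k \<in> Sr r"
  unfolding Sr_eq by (rule range_eqI[of _ _ "{#k#}"]) simp

lemma atoms_sub: "atoms (Sr r) \<subseteq> range (\<lambda>k. r^k)"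
proof
  fix a assume a: "a \<in> atoms (Sr r)"
  then obtain u where u: "a = val u" unfolding atoms_def Sr_eq by auto
  have "u \<noteq> {#}" using a u unfolding atoms_def by auto
  then obtain k u' where ku: "u = add_mset k u'" by (metis multi_nonempty_split)
  have "val u' \<in> Sr r" unfolding Sr_eq by simp
  moreover have "a = r ^ k + val u'" using u ku by simp
  ultimately have "r ^ k = 0 \<or> val u' = 0" using a pow_in unfolding atoms_def by blast
  then have "val u' = 0" using r_pos by simp
  then show "a \<in> range (\<lambda>k. r^k)" using \<open>a = r ^ k + val u'\<close> by simp
qed

lemma n2_of_atomic:
  assumes "atomic (Sr r)" shows "2 \<le> n"
proof (rule ccontr)
  assume "\<not> 2 \<le> n"
  then have n1: "n = 1" using n_pos by simp
  have "atoms (Sr r) = {}"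
  proof (rule ccontr)
    assume "atoms (Sr r) \<noteq> {}"
    then obtain a where a: "a \<in> atoms (Sr r)" by blast
    then obtain k where k: "a = r ^ k" using atoms_sub by blast
    have e1: "of_nat d * r ^ Suc k = r ^ k" using dr[of k] n1 by simp
    have e2: "(of_nat d :: rat) = 1 + of_nat (d - 1)" using d2 by (simp add: of_nat_diff)
    have "r ^ k = (1 + of_nat (d - 1)) * r ^ Suc k" using e1 e2 by metis
    then have "r ^ k = r ^ Suc k + val (replicate_mset (d - 1) (Suc k))"
      by (simp only: distrib_right val_rep mult_1)
    moreover have "val (replicate_mset (d - 1) (Suc k)) \<in> Sr r" unfolding Sr_eq by (rule rangeI)
    moreover have "val (replicate_mset (d - 1) (Suc k)) \<noteq> 0" using d2 r_pos by simp
    moreover have "r ^ Suc k \<noteq> 0" using r_pos by simp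
    moreover have "\<forall>b\<in>Sr r. \<forall>c\<in>Sr r. a = b + c \<longrightarrow> b = 0 \<or> c = 0"
      using a unfolding atoms_def by blast
    ultimately show False using k pow_in by blast
  qed
  moreover have "(1::rat) \<in> Sr r" using pow_in[of 0] by simp
  ultimately obtain z :: "rat multiset" where "set_mset z \<subseteq> {}" "sum_mset z = 1"
    using assms unfolding atomic_def Zf_def by fastforce
  then show False by simp
qed

abbreviation P :: "nat multiset \<Rightarrow> rat multiset" where
  "P u \<equiv> image_mset (\<lambda>k. r^k) u"

lemma fdist_P: "fdist (P u) (P v) = max (size (u - v)) (size (v - u))"
  by (simp add: fdist_alt image_diff_inj[OF inj_pow, symmetric])

lemma P_inj: "P u = P v \<Longrightarrow> u = v"
  using multiset.inj_map[OF inj_pow] by (auto simp: inj_def)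

lemma sum_P: "sum_mset (P u) = val u" by (simp add: val_def)

end

locale pw2 = pw + assumes n2: "2 \<le> n"
begin

lemma atoms_eq: "atoms (Sr r) = range (\<lambda>k. r^k)"
proof
  show "atoms (Sr r) \<subseteq> range (\<lambda>k. r^k)" by (rule atoms_sub)
  show "range (\<lambda>k. r^k) \<subseteq> atoms (Sr r)"
  proof
    fix a assume "a \<in> range (\<lambda>k. r^k)"
    then obtain k where a: "a = r ^ k" by auto
    have "\<forall>b\<in>Sr r. \<forall>c\<in>Sr r. r ^ k = b + c \<longrightarrow> b = 0 \<or> c = 0"
    proof (intro ballI impI, rule ccontr)
      fix b c assume bc: "b \<in> Sr r" "c \<in> Sr r" "r ^ k = b + c" "\<not> (b = 0 \<or> c = 0)"
      obtain u v where uv: "b = val u" "c = val v" using bc unfolding Sr_eq by auto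
      have une: "u \<noteq> {#}" "v \<noteq> {#}" using bc uv by auto
      define w where "w = u + v"
      have vw: "val w = r ^ k" using bc uv w_def by simp
      have "size u \<noteq> 0" "size v \<noteq> 0" using une by auto
      then have sw: "2 \<le> size w" unfolding w_def size_union by linarith
      have kw: "k \<notin># w"
      proof
        assume "k \<in># w"
        then obtain w' where w': "w = add_mset k w'" by (metis multi_member_split)
        then have "val w' = 0" using vw by simp
        then have "w' = {#}" using val_eq_0 by simp
        then show False using sw w' by simp
      qed
      have lt: "\<forall>j\<in>#w. r ^ j < r ^ k"
      proof
        fix j assume j: "j \<in># w"
        then have w': "w = add_mset j (w - {#j#})" by simp
        have "size (w - {#j#}) = size w - 1" using j by (simp add: size_Diff_singleton)
        then have "w - {#j#} \<noteq> {#}" using sw by auto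
        then have "0 < val (w - {#j#})" using val_pos by simp
        moreover have "r ^ k = r ^ j + val (w - {#j#})" using vw w' by (metis val_add_mset)
        ultimately show "r ^ j < r ^ k" by simp
      qed
      have disj: "{#k#} \<inter># w = {#}" using kw by (intro multiset_eqI) (auto simp: count_eq_zero_iff)
      have vv: "val {#k#} = val w" using vw by simp
      show False
      proof (cases "1 < r")
        case True
        have "\<forall>j\<in>#{#k#}+w. j \<le> k" using lt power_strict_increasing_iff[OF True] by auto
        then have "d dvd count {#k#} k" using keyD[OF disj vv] by simp
        then show False using d2 by simp
      next
        case False
        then have r1: "r < 1" using r_ne1 by simp
        have "\<forall>j\<in>#{#k#}+w. k \<le> j" using lt power_strict_decreasing_iff[OF r_pos r1]
          by (auto intro: less_imp_le)
        then have "n dvd count {#k#} k" using keyN[OF disj vv] by simp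
        then show False using n2 by simp
      qed
    qed
    then show "a \<in> atoms (Sr r)" using a pow_in r_pos unfolding atoms_def by simp
  qed
qed

lemma Zf_eq: "Zf (Sr r) x = P ` {u. val u = x}"
proof
  show "Zf (Sr r) x \<subseteq> P ` {u. val u = x}"
  proof
    fix z assume z: "z \<in> Zf (Sr r) x"
    then obtain u where "z = P u" using mset_range unfolding Zf_def atoms_eq by blast
    then show "z \<in> P ` {u. val u = x}" using z sum_P unfolding Zf_def by auto
  qed
  show "P ` {u. val u = x} \<subseteq> Zf (Sr r) x"
    unfolding Zf_def atoms_eq using sum_P by auto
qed

lemma Lset_eq: "Lset (Sr r) x = size ` {u. val u = x}"
  unfolding Lset_def Zf_eq by (auto simp: image_image)

lemma two_iff: "(\<exists>z\<in>Zf (Sr r) x. \<exists>z'\<in>Zf (Sr r) x. z \<noteq> z') \<longleftrightarrow> (\<exists>u v. val u = x \<and> val v = x \<and> u \<noteq> v)"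
proof
  assume "\<exists>z\<in>Zf (Sr r) x. \<exists>z'\<in>Zf (Sr r) x. z \<noteq> z'"
  then show "\<exists>u v. val u = x \<and> val v = x \<and> u \<noteq> v" unfolding Zf_eq by auto
next
  assume "\<exists>u v. val u = x \<and> val v = x \<and> u \<noteq> v"
  then obtain u v where "val u = x" "val v = x" "u \<noteq> v" by blast
  moreover have "P u \<noteq> P v" using P_inj \<open>u \<noteq> v\<close> by blast
  ultimately show "\<exists>z\<in>Zf (Sr r) x. \<exists>z'\<in>Zf (Sr r) x. z \<noteq> z'" unfolding Zf_eq by blast
qed

lemma Delta_two:
  assumes "val u = x" "val v = x" "u \<noteq> v" shows "Delta (Sr r) x = {g}"
  unfolding Delta_def Lset_eq
proof (rule delta_AP[OF g_pos])
  fix a b assume "a \<in> size ` {u. val u = x}" "b \<in> size ` {u. val u = x}" "a \<le> b"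
  then obtain u1 v1 where "a = size u1" "b = size v1" "val u1 = x" "val v1 = x" by auto
  then have "int g dvd int b - int a" using Qs_dvd[OF connect, of u1 v1] by simp
  then have "int g dvd int (b - a)" using \<open>a \<le> b\<close> by (simp add: of_nat_diff)
  then show "g dvd b - a" by (simp only: int_dvd_int_iff)
next
  fix a b l assume "a \<in> size ` {u. val u = x}" "b \<in> size ` {u. val u = x}" "a \<le> l" "l \<le> b" "g dvd l - a"
  then obtain u1 v1 where uv: "a = size u1" "b = size v1" "val u1 = x" "val v1 = x" by auto
  have "int g dvd int (l - a)" using \<open>g dvd l - a\<close> by (simp only: int_dvd_int_iff)
  then have "int g dvd int l - int a" using \<open>a \<le> l\<close> by (simp add: of_nat_diff)
  then obtain w where "Q\<^sup>*\<^sup>* u1 w" "size w = l"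
    using Qs_ivt[OF connect, of u1 v1 l] uv \<open>a \<le> l\<close> \<open>l \<le> b\<close> by auto
  then show "l \<in> size ` {u. val u = x}" using Qs_val uv by force
next
  have "Q\<^sup>*\<^sup>* u v" using connect assms by simp
  then obtain y where y: "Q u y" using assms(3) converse_rtranclpE by metis
  then have "val y = x" using Q_val[OF y] assms(1) by simp
  then show "\<exists>a\<in>size ` {u. val u = x}. a + g \<in> size ` {u. val u = x}"
  proof -
    have su: "size u \<in> size ` {u. val u = x}" using assms(1) by blast
    have sy: "size y \<in> size ` {u. val u = x}" using \<open>val y = x\<close> by blast
    show ?thesis
    proof (cases "size y = size u + g")
      case True then show ?thesis using su sy by (intro bexI[of _ "size u"]) simp_all
    next
      case False
      then have "size u = size y + g" using Q_size[OF y] by simp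
      then show ?thesis using su sy by (intro bexI[of _ "size y"]) simp_all
    qed
  qed
qed

lemma Qs_R:
  assumes "Q\<^sup>*\<^sup>* a b" "val a = x"
  shows "(\<lambda>p q. p \<in> Zf (Sr r) x \<and> q \<in> Zf (Sr r) x \<and> fdist p q \<le> max n d)\<^sup>*\<^sup>* (P a) (P b)"
  using assms
proof (induction rule: rtranclp_induct)
  case base then show ?case by simp
next
  case (step v v')
  have vx1: "val v = x" using Qs_val[OF step(1)] step(4) by simp
  have vx: "val v = x" "val v' = x" using vx1 Q_val[OF step(2)] by simp_all
  have "fdist (P v) (P v') = max n d"
    using step(2) unfolding Q_def fdist_P using step_diff by (auto simp: max.commute)
  then have "P v \<in> Zf (Sr r) x \<and> P v' \<in> Zf (Sr r) x \<and> fdist (P v) (P v') \<le> max n d"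
    using vx unfolding Zf_eq by auto
  then show ?case by (rule rtranclp.rtrancl_into_rtrancl[OF step(3)[OF step(4)]])
qed

lemma cat_two:
  assumes "val u = x" "val v = x" "u \<noteq> v" shows "cat (Sr r) x = enat (max n d)"
  unfolding cat_def
proof (rule Inf_eqI)
  fix N assume "N \<in> {N. \<forall>z\<in>Zf (Sr r) x. \<forall>z'\<in>Zf (Sr r) x.
       \<exists>zs. is_chain (Sr r) x N zs \<and> hd zs = z \<and> last zs = z'}"
  moreover have "P u \<in> Zf (Sr r) x" "P v \<in> Zf (Sr r) x" using assms unfolding Zf_eq by auto
  ultimately obtain zs where zs: "is_chain (Sr r) x N zs" "hd zs = P u" "last zs = P v" by blast
  have "\<not> (\<forall>i. Suc i < length zs \<longrightarrow> zs!i = zs!Suc i)"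
  proof
    assume "\<forall>i. Suc i < length zs \<longrightarrow> zs!i = zs!Suc i"
    then have "hd zs = last zs" using chain_const zs(1) unfolding is_chain_def by blast
    then have "P u = P v" using zs(2,3) by simp
    then show False using assms(3) P_inj by blast
  qed
  then obtain i where i: "Suc i < length zs" "zs!i \<noteq> zs!Suc i" by blast
  have "zs!i \<in> Zf (Sr r) x" "zs!Suc i \<in> Zf (Sr r) x"
  proof -
    have "zs!i \<in> set zs" "zs!Suc i \<in> set zs" using i(1) by simp_all
    then show "zs!i \<in> Zf (Sr r) x" "zs!Suc i \<in> Zf (Sr r) x" using zs(1) unfolding is_chain_def by auto
  qed
  then obtain a b where ab: "zs!i = P a" "zs!Suc i = P b" "val a = x" "val b = x"
    unfolding Zf_eq by auto
  then have "a \<noteq> b" using i by auto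
  then have "max n d \<le> max (size (a - b)) (size (b - a))" using K2[of a b] ab(3,4) by simp
  then have "max n d \<le> fdist (zs!i) (zs!Suc i)" using ab(1,2) fdist_P by simp
  moreover have "enat (fdist (zs!i) (zs!Suc i)) \<le> N" using zs(1) i unfolding is_chain_def by blast
  ultimately show "enat (max n d) \<le> N" by (meson enat_ord_simps(1) order_trans)
next
  fix y assume H: "\<And>N. N \<in> {N. \<forall>z\<in>Zf (Sr r) x. \<forall>z'\<in>Zf (Sr r) x.
       \<exists>zs. is_chain (Sr r) x N zs \<and> hd zs = z \<and> last zs = z'} \<Longrightarrow> y \<le> N"
  have "enat (max n d) \<in> {N. \<forall>z\<in>Zf (Sr r) x. \<forall>z'\<in>Zf (Sr r) x.
       \<exists>zs. is_chain (Sr r) x N zs \<and> hd zs = z \<and> last zs = z'}"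
  proof (safe)
    fix z z' assume "z \<in> Zf (Sr r) x" "z' \<in> Zf (Sr r) x"
    then obtain a b where ab: "z = P a" "z' = P b" "val a = x" "val b = x"
      unfolding Zf_eq by auto
    let ?R = "\<lambda>p q. p \<in> Zf (Sr r) x \<and> q \<in> Zf (Sr r) x \<and> fdist p q \<le> max n d"
    have "Q\<^sup>*\<^sup>* a b" using connect ab(3,4) by simp
    then have RR: "?R\<^sup>*\<^sup>* (P a) (P b)" using Qs_R ab(3) by blast
    obtain zs where zs: "zs \<noteq> []" "hd zs = P a" "last zs = P b"
      "set zs \<subseteq> {y. ?R\<^sup>*\<^sup>* (P a) y}" "\<forall>i. Suc i < length zs \<longrightarrow> ?R (zs!i) (zs!Suc i)"
      using rtranclp_list[OF RR] by (elim exE conjE) blast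
    have Pa: "P a \<in> Zf (Sr r) x" using ab unfolding Zf_eq by auto
    have "set zs \<subseteq> Zf (Sr r) x"
    proof
      fix y assume "y \<in> set zs"
      then have "?R\<^sup>*\<^sup>* (P a) y" using zs(4) by auto
      then show "y \<in> Zf (Sr r) x" using Pa by (cases rule: rtranclp.cases) auto
    qed
    moreover have "\<forall>i. Suc i < length zs \<longrightarrow> enat (fdist (zs!i) (zs!Suc i)) \<le> enat (max n d)"
      using zs(5) by simp
    ultimately have "is_chain (Sr r) x (enat (max n d)) zs" using zs(1) unfolding is_chain_def by blast
    then show "\<exists>zs. is_chain (Sr r) x (enat (max n d)) zs \<and> hd zs = z \<and> last zs = z'"
      using zs(2,3) ab(1,2) by blast
  qed
  then show "y \<le> enat (max n d)" by (rule H)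
qed

lemma one_fact:
  assumes "\<not> (\<exists>u v. val u = x \<and> val v = x \<and> u \<noteq> v)"
  shows "Delta (Sr r) x = {}" "cat (Sr r) x = 0"
proof -
  have "\<forall>z\<in>Zf (Sr r) x. \<forall>z'\<in>Zf (Sr r) x. z = z'" using assms two_iff by blast
  then show "Delta (Sr r) x = {}" "cat (Sr r) x = 0" using unique_fact by blast+
qed

end


primrec ws :: "nat \<Rightarrow> nat \<Rightarrow> nat multiset" where
  "ws c 0 = {#}"
| "ws c (Suc t) = ws c t + replicate_mset c (Suc t)"

context pw2 begin

lemma wit: "val (replicate_mset n 0) = of_nat n" "val (replicate_mset d 1) = of_nat n"
  "replicate_mset n (0::nat) \<noteq> replicate_mset d 1" "of_nat n \<in> Sr r" "(of_nat n :: rat) \<noteq> 0"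
proof -
  show "val (replicate_mset n 0) = of_nat n" by simp
  show "val (replicate_mset d 1) = of_nat n" using dr[of 0] by simp
  show "replicate_mset n (0::nat) \<noteq> replicate_mset d 1"
  proof
    assume "replicate_mset n (0::nat) = replicate_mset d 1"
    then have "count (replicate_mset n 0) (0::nat) = count (replicate_mset d (1::nat)) 0" by simp
    then show False using n_pos by simp
  qed
  show "of_nat n \<in> Sr r" unfolding Sr_eq using \<open>val (replicate_mset n 0) = of_nat n\<close>
    by (metis rangeI)
  show "(of_nat n :: rat) \<noteq> 0" using n_pos by simp
qed

lemma part3: "\<forall>x\<in>Sr r. (\<exists>z\<in>Zf (Sr r) x. \<exists>z'\<in>Zf (Sr r) x. z \<noteq> z') \<longrightarrow> Delta (Sr r) x = {g}"
  using two_iff Delta_two by blast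

lemma Delta_mon: "Delta_monoid (Sr r) = {g}"
proof
  show "Delta_monoid (Sr r) \<subseteq> {g}"
    unfolding Delta_monoid_def using Delta_two one_fact by blast
  show "{g} \<subseteq> Delta_monoid (Sr r)"
    unfolding Delta_monoid_def using Delta_two[OF wit(1,2,3)] wit(4,5) by blast
qed

lemma cat_vals: "cat (Sr r) x = 0 \<or> ((\<exists>u v. val u = x \<and> val v = x \<and> u \<noteq> v) \<and> cat (Sr r) x = enat (max n d))"
  using cat_two one_fact by blast

lemma Ca_eq: "Ca (Sr r) = {enat (max n d)}"
proof
  show "Ca (Sr r) \<subseteq> {enat (max n d)}" unfolding Ca_def using cat_vals by fastforce
  have "cat (Sr r) (of_nat n) = enat (max n d)" using cat_two[OF wit(1,2,3)] .
  moreover have "enat (max n d) > 0" using n_pos by (simp add: zero_enat_def)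
  ultimately show "{enat (max n d)} \<subseteq> Ca (Sr r)" unfolding Ca_def using wit(4) by force
qed

lemma catmon_eq: "cat_monoid (Sr r) = enat (max n d)"
  unfolding cat_monoid_def
proof (rule antisym)
  show "(SUP x\<in>Sr r. cat (Sr r) x) \<le> enat (max n d)"
  proof (rule SUP_least)
    fix x assume "x \<in> Sr r"
    show "cat (Sr r) x \<le> enat (max n d)" using cat_vals[of x] by (metis order_refl zero_le)
  qed
  have "cat (Sr r) (of_nat n) = enat (max n d)" using cat_two[OF wit(1,2,3)] .
  then show "enat (max n d) \<le> (SUP x\<in>Sr r. cat (Sr r) x)"
    using SUP_upper[OF wit(4), of "cat (Sr r)"] by simp
qed

lemma notBF: assumes "r < 1" shows "\<not> BF_monoid (Sr r)"
proof
  assume bf: "BF_monoid (Sr r)"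
  have nd: "n < d" using assms r_eq d_pos by (simp add: divide_less_eq)
  have vs: "val (ws (d - n) t + replicate_mset n t) = of_nat n" for t
  proof (induction t)
    case 0 then show ?case by simp
  next
    case (Suc t)
    have "(of_nat (d - n) :: rat) + of_nat n = of_nat d" using nd by (simp add: of_nat_diff)
    then have "of_nat (d - n) * r ^ Suc t + of_nat n * r ^ Suc t = of_nat n * r ^ t"
      using dr[of t] by (metis distrib_right)
    then show ?case using Suc by (simp add: algebra_simps)
  qed
  have ss: "size (ws (d - n) t + replicate_mset n t) = t * (d - n) + n" for t
    by (induction t) auto
  have "range (\<lambda>t. t * (d - n) + n) \<subseteq> Lset (Sr r) (of_nat n)"
    unfolding Lset_eq using vs ss by (metis (mono_tags, lifting) image_eqI image_subsetI mem_Collect_eq)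
  moreover have "infinite (range (\<lambda>t. t * (d - n) + n))"
    using nd by (intro range_inj_infinite) (auto simp: inj_def)
  ultimately have "infinite (Lset (Sr r) (of_nat n))" using finite_subset by blast
  then show False using bf wit(4) unfolding BF_monoid_def by blast
qed

end

lemma Sr_ge1: assumes "1 \<le> r" "y \<in> Sr r" "y \<noteq> 0" shows "1 \<le> y"
proof -
  obtain m where m: "y = sum_mset (image_mset (\<lambda>k. r^k) m)" using assms(2) unfolding Sr_def by auto
  then have "m \<noteq> {#}" using assms(3) by auto
  then obtain k m' where "m = add_mset k m'" by (metis multi_nonempty_split)
  then have "y = r ^ k + sum_mset (image_mset (\<lambda>k. r^k) m')" using m by simp
  moreover have "1 \<le> r ^ k" using assms(1) by (rule one_le_power)
  moreover have "0 \<le> sum_mset (image_mset (\<lambda>k. r^k) m')"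
  proof -
    have r0: "0 \<le> r" using assms(1) by simp
    show ?thesis by (induction m') (simp_all add: r0)
  qed
  ultimately show ?thesis by linarith
qed

lemma size_le_sum: "(\<forall>a\<in>#z. (1::rat) \<le> a) \<Longrightarrow> of_nat (size z) \<le> sum_mset z"
  by (induction z) auto

lemma BF_ge1: assumes "1 \<le> r" shows "BF_monoid (Sr r)"
  unfolding BF_monoid_def
proof
  fix x assume "x \<in> Sr r"
  have "Lset (Sr r) x \<subseteq> {..nat \<lceil>x\<rceil>}"
  proof
    fix l assume "l \<in> Lset (Sr r) x"
    then obtain z where z: "z \<in> Zf (Sr r) x" "l = size z" unfolding Lset_def by auto
    have "\<forall>a\<in>#z. 1 \<le> a" using z(1) Sr_ge1[OF assms] unfolding Zf_def atoms_def by auto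
    then have "of_nat l \<le> x" using size_le_sum z unfolding Zf_def by auto
    then have "of_nat l \<le> (of_int \<lceil>x\<rceil> :: rat)" using le_of_int_ceiling order_trans by blast
    then have "int l \<le> \<lceil>x\<rceil>" by (metis of_int_le_iff of_int_of_nat_eq)
    then show "l \<in> {..nat \<lceil>x\<rceil>}" by simp
  qed
  then show "finite (Lset (Sr r) x)" by (rule finite_subset) simp
qed

lemma rep_single: "set_mset z \<subseteq> {a} \<Longrightarrow> z = replicate_mset (size z) a"
  by (induction z) auto

lemma nat_case:
  assumes "r = of_nat m" "0 < m"
  shows "Sr r = range of_nat" "atoms (Sr r) = {1}" "\<forall>z\<in>Zf (Sr r) x. \<forall>z'\<in>Zf (Sr r) x. z = z'"
proof -
  have eq1: "sum_mset (image_mset (\<lambda>k. r^k) u) = of_nat (sum_mset (image_mset (\<lambda>k. m^k) u))" for u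
    using assms(1) by (induction u) auto
  have eq2: "of_nat j = sum_mset (image_mset (\<lambda>k. r^k) (replicate_mset j 0))" for j by simp
  show S: "Sr r = range of_nat"
  proof
    show "Sr r \<subseteq> range of_nat"
    proof
      fix x assume "x \<in> Sr r"
      then obtain u where "x = sum_mset (image_mset (\<lambda>k. r^k) u)" unfolding Sr_def by auto
      then have "x = of_nat (sum_mset (image_mset (\<lambda>k. m^k) u))" using eq1 by simp
      then show "x \<in> range of_nat" by (simp only: rangeI)
    qed
    show "range of_nat \<subseteq> Sr r"
    proof
      fix x :: rat assume "x \<in> range of_nat"
      then obtain j where "x = of_nat j" by auto
      then have "x = sum_mset (image_mset (\<lambda>k. r^k) (replicate_mset j 0))" using eq2[of j] by (rule trans)
      then show "x \<in> Sr r" unfolding Sr_def by blast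
    qed
  qed
  show A: "atoms (Sr r) = {1}"
  proof
    show "{1} \<subseteq> atoms (Sr r)"
    proof -
      have "\<forall>b\<in>Sr r. \<forall>c\<in>Sr r. (1::rat) = b + c \<longrightarrow> b = 0 \<or> c = 0"
      proof (intro ballI impI)
        fix b c assume "b \<in> Sr r" "c \<in> Sr r" "(1::rat) = b + c"
        then obtain i j where "b = of_nat i" "c = of_nat j" "(1::rat) = of_nat i + of_nat j" using S by auto
        then have "1 = i + j" by (metis of_nat_1 of_nat_add of_nat_eq_iff)
        then show "b = 0 \<or> c = 0" using \<open>b = of_nat i\<close> \<open>c = of_nat j\<close> by auto
      qed
      then show ?thesis unfolding atoms_def S by (auto intro: range_eqI[of _ _ 1])
    qed
    show "atoms (Sr r) \<subseteq> {1}"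
    proof
      fix a assume a: "a \<in> atoms (Sr r)"
      then obtain j where j: "a = of_nat j" unfolding atoms_def S by auto
      have "j \<noteq> 0" using a j unfolding atoms_def by auto
      show "a \<in> {1}"
      proof (rule ccontr)
        assume "a \<notin> {1}"
        then have "2 \<le> j" using j \<open>j \<noteq> 0\<close> by auto
        then have "a = 1 + of_nat (j - 1)" using j by (simp add: of_nat_diff)
        moreover have "(1::rat) \<in> Sr r" "of_nat (j - 1) \<in> Sr r" using S by (auto intro: range_eqI[of _ _ 1])
        moreover have "(of_nat (j - 1)::rat) \<noteq> 0" using \<open>2 \<le> j\<close> by simp
        ultimately show False using a unfolding atoms_def by force
      qed
    qed
  qed
  show "\<forall>z\<in>Zf (Sr r) x. \<forall>z'\<in>Zf (Sr r) x. z = z'"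
  proof (intro ballI)
    fix z z' assume "z \<in> Zf (Sr r) x" "z' \<in> Zf (Sr r) x"
    then have zz: "set_mset z \<subseteq> {1}" "set_mset z' \<subseteq> {1}" "sum_mset z = x" "sum_mset z' = x"
      unfolding Zf_def A by auto
    have e1: "z = replicate_mset (size z) 1" by (rule rep_single[OF zz(1)])
    have e2: "z' = replicate_mset (size z') 1" by (rule rep_single[OF zz(2)])
    have s1: "sum_mset z = of_nat (size z)" by (subst e1) simp
    have s2: "sum_mset z' = of_nat (size z')" by (subst e2) simp
    have "(of_nat (size z) :: rat) = of_nat (size z')" using s1 s2 zz(3,4) by simp
    then have "size z = size z'" by simp
    then show "z = z'" using e1 e2 by metis
  qed
qed



theorem corollary3p4:
  fixes r :: rat
  assumes "r > 0" and "atomic (Sr r)"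
  shows "(BF_monoid (Sr r) \<longleftrightarrow> r \<ge> 1)
    \<and> (r \<in> \<nat> \<longrightarrow>
         (\<exists>f :: rat \<Rightarrow> nat. bij_betw f (Sr r) UNIV \<and> f 0 = 0 \<and>
             (\<forall>x\<in>Sr r. \<forall>y\<in>Sr r. f (x + y) = f x + f y))
       \<and> (\<forall>x\<in>Sr r - {0}. Delta (Sr r) x = {} \<and> cat (Sr r) x = 0))
    \<and> (r \<notin> \<nat> \<longrightarrow>
         (\<forall>x\<in>Sr r. (\<exists>z\<in>Zf (Sr r) x. \<exists>z'\<in>Zf (Sr r) x. z \<noteq> z') \<longrightarrow>
             Delta (Sr r) x = {nat \<bar>numr r - denr r\<bar>})
       \<and> Delta_monoid (Sr r) = {nat \<bar>numr r - denr r\<bar>})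
    \<and> (r \<notin> \<nat> \<longrightarrow>
         Ca (Sr r) = {enat (nat (max (numr r) (denr r)))}
       \<and> cat_monoid (Sr r) = enat (nat (max (numr r) (denr r))))"
proof -
  obtain p q where pq: "quotient_of r = (p, q)" by (cases "quotient_of r")
  have num: "numr r = p" "denr r = q" using pq by (simp_all add: numr_def denr_def)
  have q0: "0 < q" using quotient_of_denom_pos[OF pq] .
  have rpq: "r = of_int p / of_int q" using quotient_of_div[OF pq] .
  have p0: "0 < p" using assms(1) rpq q0 by (simp add: zero_less_divide_iff)
  have cpq: "coprime p q" using quotient_of_coprime[OF pq] .
  define n where "n = nat p"
  define d where "d = nat q"
  have pn: "p = int n" "q = int d" using p0 q0 by (simp_all add: n_def d_def)
  have rnd: "r = of_nat n / of_nat d" using rpq pn by simp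
  have cnd: "coprime n d" using cpq pn by simp
  have npos: "0 < n" using p0 pn by simp
  have Nge1: "r \<in> \<nat> \<Longrightarrow> 1 \<le> r"
  proof -
    assume "r \<in> \<nat>"
    then obtain m where m: "r = of_nat m" by (auto elim: Nats_cases)
    then have "m \<noteq> 0" using assms(1) by auto
    then show "1 \<le> r" using m by simp
  qed
  have stp: "pw2 r n d" if nN: "r \<notin> \<nat>"
  proof -
    have "d \<noteq> 1"
    proof
      assume "d = 1"
      then have "r = of_nat n" using rnd by simp
      then show False using nN by simp
    qed
    then have d2: "2 \<le> d" using q0 pn by simp
    have pwi: "pw r n d" by unfold_locales (use rnd npos d2 cnd in auto)
    have "2 \<le> n" using pw.n2_of_atomic[OF pwi assms(2)] .
    then show ?thesis using pwi by (intro pw2.intro pw2_axioms.intro) auto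
  qed
  have P1: "BF_monoid (Sr r) \<longleftrightarrow> r \<ge> 1"
  proof (cases "1 \<le> r")
    case True then show ?thesis using BF_ge1 by simp
  next
    case False
    then have "r \<notin> \<nat>" using Nge1 by blast
    then interpret pw2 r n d by (rule stp)
    show ?thesis using notBF False by simp
  qed
  have P2: "r \<in> \<nat> \<longrightarrow>
         (\<exists>f :: rat \<Rightarrow> nat. bij_betw f (Sr r) UNIV \<and> f 0 = 0 \<and>
             (\<forall>x\<in>Sr r. \<forall>y\<in>Sr r. f (x + y) = f x + f y))
       \<and> (\<forall>x\<in>Sr r - {0}. Delta (Sr r) x = {} \<and> cat (Sr r) x = 0)"
  proof
    assume "r \<in> \<nat>"
    then obtain m where m: "r = of_nat m" by (auto elim: Nats_cases)
    then have m0: "0 < m" using assms(1) by simp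
    note nc = nat_case[OF m m0]
    define f where "f = (\<lambda>x::rat. nat \<lfloor>x\<rfloor>)"
    have fo: "f (of_nat k) = k" for k unfolding f_def by simp
    have "bij_betw f (Sr r) UNIV" unfolding nc(1) bij_betw_def
    proof
      show "inj_on f (range of_nat)" by (auto simp: inj_on_def fo)
      show "f ` range of_nat = UNIV"
      proof (rule set_eqI, rule iffI)
        fix k :: nat assume "k \<in> UNIV"
        have "k = f (of_nat k)" by (simp add: fo)
        then show "k \<in> f ` range of_nat" by blast
      qed simp
    qed
    moreover have "f 0 = 0" unfolding f_def by simp
    moreover have "\<forall>x\<in>Sr r. \<forall>y\<in>Sr r. f (x + y) = f x + f y"
      unfolding nc(1) by (auto simp: fo simp flip: of_nat_add)
    moreover have "\<forall>x\<in>Sr r - {0}. Delta (Sr r) x = {} \<and> cat (Sr r) x = 0"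
      using nc(3) unique_fact by blast
    ultimately show "(\<exists>f :: rat \<Rightarrow> nat. bij_betw f (Sr r) UNIV \<and> f 0 = 0 \<and>
             (\<forall>x\<in>Sr r. \<forall>y\<in>Sr r. f (x + y) = f x + f y))
       \<and> (\<forall>x\<in>Sr r - {0}. Delta (Sr r) x = {} \<and> cat (Sr r) x = 0)" by blast
  qed
  have P34: "(r \<notin> \<nat> \<longrightarrow>
         (\<forall>x\<in>Sr r. (\<exists>z\<in>Zf (Sr r) x. \<exists>z'\<in>Zf (Sr r) x. z \<noteq> z') \<longrightarrow>
             Delta (Sr r) x = {nat \<bar>numr r - denr r\<bar>})
       \<and> Delta_monoid (Sr r) = {nat \<bar>numr r - denr r\<bar>})
    \<and> (r \<notin> \<nat> \<longrightarrow>
         Ca (Sr r) = {enat (nat (max (numr r) (denr r)))}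
       \<and> cat_monoid (Sr r) = enat (nat (max (numr r) (denr r))))"
  proof (intro conjI impI)
    assume nN: "r \<notin> \<nat>"
    interpret pw2 r n d using stp[OF nN] .
    have ge: "g = nat \<bar>numr r - denr r\<bar>" unfolding g_def num pn by auto
    have me: "max n d = nat (max (numr r) (denr r))" unfolding num pn by auto
    show "\<forall>x\<in>Sr r. (\<exists>z\<in>Zf (Sr r) x. \<exists>z'\<in>Zf (Sr r) x. z \<noteq> z') \<longrightarrow>
             Delta (Sr r) x = {nat \<bar>numr r - denr r\<bar>}" using part3 ge by simp
    show "Delta_monoid (Sr r) = {nat \<bar>numr r - denr r\<bar>}" using Delta_mon ge by simp
    show "Ca (Sr r) = {enat (nat (max (numr r) (denr r)))}" using Ca_eq me by simp
    show "cat_monoid (Sr r) = enat (nat (max (numr r) (denr r)))" using catmon_eq me by simp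
  qed
  show ?thesis using P1 P2 P34 by blast
qed


end
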